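(* Let $G$ be a connected graph with a pendant vertex $u$, and let $v$ be the unique neighbour of $u$, assumed to be a cut-vertex of $G$. If $G-\{v,u\}$ has at least two connected components, then $u$ is not a basis forced vertex of $G$.
   Context: All graphs are finite and simple. A pendant is a vertex with exactly one neighbour; a cut-vertex is a vertex $v$ such that $G-v$ is disconnected. For vertices $x,y$ of a connected graph $G$, $d(x,y)$ is the length of a shortest $x$–$y$ path. A set $R\subseteq V(G)$ is a resolving set if for all distinct $x,y\in V(G)$ there is $r\in R$ with $d(r,x)\neq d(r,y)$. The metric dimension $\dim(G)$ is the minimum cardinality of a resolving set, and a resolving set of cardinality $\dim(G)$ is a metric basis. A vertex is a basis forced vertex if it belongs to every metric basis of $G$. *)

theory Defs
  imports Main
begin

definition simple_graph :: "'a set \<Rightarrow> ('a \<Rightarrow> 'a \<Rightarrow> bool) \<Rightarrow> bool" where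
  "simple_graph V E \<longleftrightarrow> finite V \<and> (\<forall>x y. E x y \<longrightarrow> E y x) \<and> (\<forall>x. \<not> E x x)
     \<and> (\<forall>x y. E x y \<longrightarrow> x \<in> V \<and> y \<in> V)"

text \<open>Walks in the subgraph induced by V, as vertex lists.\<close>
definition is_walk :: "'a set \<Rightarrow> ('a \<Rightarrow> 'a \<Rightarrow> bool) \<Rightarrow> 'a list \<Rightarrow> bool" where
  "is_walk V E p \<longleftrightarrow> p \<noteq> [] \<and> set p \<subseteq> V \<and> (\<forall>i. Suc i < length p \<longrightarrow> E (p ! i) (p ! Suc i))"

definition reachable :: "'a set \<Rightarrow> ('a \<Rightarrow> 'a \<Rightarrow> bool) \<Rightarrow> 'a \<Rightarrow> 'a \<Rightarrow> bool" where
  "reachable V E x y \<longleftrightarrow> (\<exists>p. is_walk V E p \<and> hd p = x \<and> last p = y)"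

definition connected_graph :: "'a set \<Rightarrow> ('a \<Rightarrow> 'a \<Rightarrow> bool) \<Rightarrow> bool" where
  "connected_graph V E \<longleftrightarrow> V \<noteq> {} \<and> (\<forall>x\<in>V. \<forall>y\<in>V. reachable V E x y)"

definition components :: "'a set \<Rightarrow> ('a \<Rightarrow> 'a \<Rightarrow> bool) \<Rightarrow> 'a set set" where
  "components V E = (\<lambda>x. {y \<in> V. reachable V E x y}) ` V"

definition dist :: "'a set \<Rightarrow> ('a \<Rightarrow> 'a \<Rightarrow> bool) \<Rightarrow> 'a \<Rightarrow> 'a \<Rightarrow> nat" where
  "dist V E x y = (LEAST n. \<exists>p. is_walk V E p \<and> hd p = x \<and> last p = y \<and> length p = Suc n)"

definition neighbours :: "'a set \<Rightarrow> ('a \<Rightarrow> 'a \<Rightarrow> bool) \<Rightarrow> 'a \<Rightarrow> 'a set" where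
  "neighbours V E x = {y \<in> V. E x y}"

definition pendant :: "'a set \<Rightarrow> ('a \<Rightarrow> 'a \<Rightarrow> bool) \<Rightarrow> 'a \<Rightarrow> bool" where
  "pendant V E x \<longleftrightarrow> x \<in> V \<and> card (neighbours V E x) = 1"

definition cut_vertex :: "'a set \<Rightarrow> ('a \<Rightarrow> 'a \<Rightarrow> bool) \<Rightarrow> 'a \<Rightarrow> bool" where
  "cut_vertex V E v \<longleftrightarrow> v \<in> V \<and> \<not> connected_graph (V - {v}) E"

definition resolving_set :: "'a set \<Rightarrow> ('a \<Rightarrow> 'a \<Rightarrow> bool) \<Rightarrow> 'a set \<Rightarrow> bool" where
  "resolving_set V E R \<longleftrightarrow> R \<subseteq> V \<and>
     (\<forall>x\<in>V. \<forall>y\<in>V. x \<noteq> y \<longrightarrow> (\<exists>r\<in>R. dist V E r x \<noteq> dist V E r y))"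

definition metric_dim :: "'a set \<Rightarrow> ('a \<Rightarrow> 'a \<Rightarrow> bool) \<Rightarrow> nat" where
  "metric_dim V E = (LEAST k. \<exists>R. resolving_set V E R \<and> card R = k)"

definition metric_basis :: "'a set \<Rightarrow> ('a \<Rightarrow> 'a \<Rightarrow> bool) \<Rightarrow> 'a set \<Rightarrow> bool" where
  "metric_basis V E R \<longleftrightarrow> resolving_set V E R \<and> card R = metric_dim V E"

definition basis_forced :: "'a set \<Rightarrow> ('a \<Rightarrow> 'a \<Rightarrow> bool) \<Rightarrow> 'a \<Rightarrow> bool" where
  "basis_forced V E x \<longleftrightarrow> (\<forall>R. metric_basis V E R \<longrightarrow> x \<in> R)"

end

theory Submission imports Defs begin

lemma walk_Nil[simp]: "\<not> is_walk V E []" by (simp add: is_walk_def)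
lemma walk_single[simp]: "is_walk V E [x] \<longleftrightarrow> x \<in> V" by (simp add: is_walk_def)
lemma walk_Cons2[simp]: "is_walk V E (x # y # p) \<longleftrightarrow> x \<in> V \<and> E x y \<and> is_walk V E (y # p)"
proof
  assume h: "is_walk V E (x # y # p)"
  have all: "\<forall>i. Suc i < length (x # y # p) \<longrightarrow> E ((x # y # p) ! i) ((x # y # p) ! Suc i)"
    using h unfolding is_walk_def by blast
  have "E x y" using all[rule_format, of 0] by simp
  moreover have "\<forall>i. Suc i < length (y # p) \<longrightarrow> E ((y # p) ! i) ((y # p) ! Suc i)"
  proof (intro allI impI)
    fix i assume "Suc i < length (y # p)"
    then show "E ((y # p) ! i) ((y # p) ! Suc i)" using all[rule_format, of "Suc i"] by simp
  qed
  moreover have "set (x # y # p) \<subseteq> V" using h unfolding is_walk_def by blast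
  ultimately show "x \<in> V \<and> E x y \<and> is_walk V E (y # p)" unfolding is_walk_def by simp
next
  assume h: "x \<in> V \<and> E x y \<and> is_walk V E (y # p)"
  show "is_walk V E (x # y # p)" unfolding is_walk_def
  proof (intro conjI allI impI)
    show "set (x # y # p) \<subseteq> V" using h by (auto simp: is_walk_def)
  next
    fix i assume i: "Suc i < length (x # y # p)"
    show "E ((x # y # p) ! i) ((x # y # p) ! Suc i)"
    proof (cases i)
      case 0 then show ?thesis using h by simp
    next
      case (Suc j)
      then have "Suc j < length (y # p)" using i by simp
      then have "E ((y # p) ! j) ((y # p) ! Suc j)" using h unfolding is_walk_def by blast
      then show ?thesis using Suc by simp
    qed
  qed simp
qed

lemma walk_set: "is_walk V E p \<Longrightarrow> set p \<subseteq> V" by (simp add: is_walk_def)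

lemma walk_append: "is_walk V E p \<Longrightarrow> is_walk V E q \<Longrightarrow> last p = hd q \<Longrightarrow> is_walk V E (p @ tl q)"
proof (induction p)
  case Nil thus ?case by simp
next
  case (Cons a p)
  note IH = Cons.IH and pr = Cons.prems
  show ?case
  proof (cases p)
    case Nil
    then have "q = a # tl q" using pr by (cases q) auto
    then show ?thesis using pr Nil by (metis append_Cons append_Nil)
  next
    case (Cons b p')
    note pc = this
    have w: "is_walk V E p" "a\<in>V" "E a b" using pr pc by auto
    have "is_walk V E (p @ tl q)" using IH w pr pc by simp
    then show ?thesis using w pc by simp
  qed
qed

lemma last_append_tl: assumes "q \<noteq> []" "last p = hd q" "p \<noteq> []" shows "last (p @ tl q) = last q"
proof (cases "tl q = []")
  case True
  then have "q = [hd q]" using assms(1) by (cases q) auto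
  then show ?thesis using True assms by (metis append_Nil2 last.simps)
next
  case False
  then have "last (tl q) = last q" using assms(1) by (cases q) auto
  then show ?thesis using False by simp
qed

lemma walk_rev: assumes sym: "\<forall>x y. E x y \<longrightarrow> E y x" shows "is_walk V E p \<Longrightarrow> is_walk V E (rev p)"
proof (induction p)
  case Nil thus ?case by simp
next
  case (Cons a p)
  note IH = Cons.IH and pr = Cons.prems
  show ?case
  proof (cases p)
    case Nil then show ?thesis using pr by simp
  next
    case (Cons b p')
    note pc = this
    have w: "is_walk V E p" "a\<in>V" "E a b" using pr pc by auto
    have bV: "b \<in> V" using w pc walk_set by fastforce
    have ba: "is_walk V E [b, a]" using w sym bV by simp
    have rp: "is_walk V E (rev p)" using IH w by simp
    have la: "last (rev p) = hd [b, a]" using pc by simp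
    have "is_walk V E (rev p @ tl [b, a])" by (rule walk_append[OF rp ba la])
    then show ?thesis by simp
  qed
qed


locale cg =
  fixes V :: "'a set" and E :: "'a \<Rightarrow> 'a \<Rightarrow> bool"
  assumes sg: "simple_graph V E" and cn: "connected_graph V E"
begin

abbreviation d where "d \<equiv> dist V E"

lemma sym: "E x y \<Longrightarrow> E y x" using sg by (simp add: simple_graph_def)
lemma irr: "\<not> E x x" using sg by (simp add: simple_graph_def)
lemma edgeV: "E x y \<Longrightarrow> x \<in> V \<and> y \<in> V" using sg by (simp add: simple_graph_def)
lemma finV: "finite V" using sg by (simp add: simple_graph_def)

lemma reach: "x \<in> V \<Longrightarrow> y \<in> V \<Longrightarrow> reachable V E x y"
  using cn by (simp add: connected_graph_def)

lemma dist_le: "is_walk V E p \<Longrightarrow> hd p = x \<Longrightarrow> last p = y \<Longrightarrow> d x y \<le> length p - 1"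
  unfolding dist_def
  by (rule Least_le) (rule exI[of _ p], cases p, auto)

lemma dist_walk: assumes "x \<in> V" "y \<in> V"
  shows "\<exists>p. is_walk V E p \<and> hd p = x \<and> last p = y \<and> length p = Suc (d x y)"
proof -
  obtain p where p: "is_walk V E p" "hd p = x" "last p = y" using reach[OF assms] reachable_def by metis
  then have "\<exists>n p. is_walk V E p \<and> hd p = x \<and> last p = y \<and> length p = Suc n"
    by (intro exI[of _ "length p - 1"] exI[of _ p]) (cases p, auto)
  then show ?thesis unfolding dist_def by (rule LeastI_ex)
qed

lemma dist_self[simp]: "x \<in> V \<Longrightarrow> d x x = 0"
  using dist_le[of "[x]" x x] by simp

lemma dist_0: assumes "x \<in> V" "y \<in> V" "d x y = 0" shows "x = y"
proof -
  obtain p where "is_walk V E p" "hd p = x" "last p = y" "length p = Suc 0"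
    using dist_walk[OF assms(1,2)] assms(3) by auto
  then show ?thesis by (cases p) auto
qed

lemma dist_sym: assumes "x \<in> V" "y \<in> V" shows "d x y = d y x"
proof -
  have *: "d a b \<le> d b a" if ab: "a \<in> V" "b \<in> V" for a b
  proof -
    obtain p where p: "is_walk V E p" "hd p = b" "last p = a" "length p = Suc (d b a)"
      using dist_walk[OF ab(2,1)] by auto
    have "is_walk V E (rev p)" using walk_rev[of E V p] p sym by blast
    moreover have "hd (rev p) = a" "last (rev p) = b" using p
      by (auto simp: hd_rev last_rev)
    ultimately show ?thesis using dist_le[of "rev p" a b] p by simp
  qed
  show ?thesis using *[of x y] *[of y x] assms by simp
qed

lemma tri: assumes "x \<in> V" "y \<in> V" "z \<in> V" shows "d x z \<le> d x y + d y z"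
proof -
  obtain p where p: "is_walk V E p" "hd p = x" "last p = y" "length p = Suc (d x y)"
    using dist_walk[OF assms(1,2)] by auto
  obtain q where q: "is_walk V E q" "hd q = y" "last q = z" "length q = Suc (d y z)"
    using dist_walk[OF assms(2,3)] by auto
  have "is_walk V E (p @ tl q)" using p q walk_append by metis
  moreover have "hd (p @ tl q) = x" using p by (cases p) auto
  moreover have "last (p @ tl q) = z" using p q last_append_tl[of q p] by fastforce
  ultimately have "d x z \<le> length (p @ tl q) - 1" using dist_le by blast
  then show ?thesis using p q by (cases q) auto
qed

lemma dist_edge: assumes "E x y" shows "d x y = 1"
proof -
  have "x \<in> V" "y \<in> V" using edgeV assms by auto
  have "d x y \<le> 1" using dist_le[of "[x,y]" x y] assms \<open>y \<in> V\<close> \<open>x \<in> V\<close> by simp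
  moreover have "x \<noteq> y" using assms irr by auto
  then have "d x y \<noteq> 0" using dist_0 \<open>y \<in> V\<close> \<open>x \<in> V\<close> by blast
  ultimately show ?thesis by simp
qed

definition closedA where
  "closedA A v \<longleftrightarrow> A \<subseteq> V \<and> v \<notin> A \<and> (\<forall>a\<in>A. \<forall>b. E a b \<longrightarrow> b \<in> A \<or> b = v)"

lemma split_walk:
  assumes cl: "closedA A v"
  shows "is_walk V E p \<Longrightarrow> hd p \<in> A \<Longrightarrow> last p \<notin> A \<Longrightarrow>
    \<exists>q1 q2. is_walk V E q1 \<and> hd q1 = hd p \<and> last q1 = v \<and> is_walk V E q2 \<and> hd q2 = v
       \<and> last q2 = last p \<and> length q1 + length q2 = Suc (length p)"
proof (induction p)
  case Nil thus ?case by simp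
next
  case (Cons a p)
  note IH = Cons.IH and pr = Cons.prems
  show ?case
  proof (cases p)
    case Nil then show ?thesis using pr by simp
  next
    case (Cons b p')
    note pc = this
    have w: "is_walk V E p" "a\<in>V" "E a b" "a \<in> A" using pr pc by auto
    then have "b \<in> A \<or> b = v" using cl unfolding closedA_def by blast
    then show ?thesis
    proof
      assume bv: "b = v"
      have "is_walk V E [a,v]" using w bv edgeV by simp
      moreover have "is_walk V E p" "hd p = v" using w pc bv by auto
      moreover have "last (a # p) = last p" using pc by simp
      ultimately show ?thesis
        by (intro exI[of _ "[a,v]"] exI[of _ p]) simp
    next
      assume "b \<in> A"
      moreover have "last p \<notin> A" using pr pc by simp
      ultimately obtain q1 q2 where q: "is_walk V E q1" "hd q1 = b" "last q1 = v" "is_walk V E q2" "hd q2 = v"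
       "last q2 = last p" "length q1 + length q2 = Suc (length p)"
        using IH w pc by auto
      have q1ne: "q1 \<noteq> []" using q(1) by auto
      then obtain q1' where q1': "q1 = b # q1'" using q(2) by (cases q1) auto
      have "is_walk V E (a # q1)" using q w q1' by simp
      moreover have "last (a # q1) = v" using q q1' by simp
      moreover have "last (a # p) = last p" using pc by simp
      ultimately show ?thesis using q
        by (intro exI[of _ "a # q1"] exI[of _ q2]) simp
    qed
  qed
qed

lemma cut_dist:
  assumes cl: "closedA A v" and x: "x \<in> A" and y: "y \<in> V" "y \<notin> A" and vV: "v \<in> V"
  shows "d x y = d x v + d v y"
proof -
  have xV: "x \<in> V" using cl x closedA_def by auto
  obtain p where p: "is_walk V E p" "hd p = x" "last p = y" "length p = Suc (d x y)"
    using dist_walk[OF xV y(1)] by auto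
  obtain q1 q2 where q: "is_walk V E q1" "hd q1 = x" "last q1 = v" "is_walk V E q2" "hd q2 = v"
       "last q2 = y" "length q1 + length q2 = Suc (length p)"
    using split_walk[OF cl p(1)] p x y by auto
  have "d x v \<le> length q1 - 1" "d v y \<le> length q2 - 1" using q dist_le by blast+
  moreover have "0 < length q1" "0 < length q2" using q by auto
  ultimately have "d x v + d v y \<le> d x y" using q(7) p(4) by linarith
  moreover have "d x y \<le> d x v + d v y" using tri xV vV y by blast
  ultimately show ?thesis by simp
qed

lemma exit_edge:
  assumes cl: "closedA A v"
  shows "is_walk V E p \<Longrightarrow> hd p \<in> A \<Longrightarrow> last p \<notin> A \<Longrightarrow> \<exists>a\<in>A. E a v"
proof (induction p)
  case Nil thus ?case by simp
next
  case (Cons a p)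
  note IH = Cons.IH and pr = Cons.prems
  show ?case
  proof (cases p)
    case Nil then show ?thesis using pr by simp
  next
    case (Cons b p')
    note pc = this
    have w: "is_walk V E p" "a\<in>V" "E a b" "a \<in> A" using pr pc by auto
    then have "b \<in> A \<or> b = v" using cl unfolding closedA_def by blast
    moreover have "last p \<notin> A" using pr pc by simp
    ultimately show ?thesis using w pc IH by auto
  qed
qed

end

context cg begin

lemma pair_lemma:
  assumes C: "closedA C v" and vV: "v \<in> V" and uV: "u \<in> V" and wC: "w \<in> C" and uC: "u \<notin> C"
    and dvw: "d v w = 1" and duv: "d u v = 1"
    and du: "\<And>z. z \<in> V \<Longrightarrow> z \<noteq> u \<Longrightarrow> d u z = 1 + d v z"
    and r0: "r0 \<in> S" "r0 \<notin> C" and SV: "S \<subseteq> V" and uS: "u \<notin> S"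
    and Bw: "\<And>z. z \<in> V \<Longrightarrow> z \<noteq> u \<Longrightarrow> d v z = 1 \<Longrightarrow> (\<forall>r\<in>S. d r u = d r z) \<Longrightarrow> z = w"
    and x: "x \<in> V" and y: "y \<in> V" and xy: "x \<noteq> y" and uxy: "d u x \<noteq> d u y"
    and Sxy: "\<forall>r\<in>S. d r x = d r y" and wxy: "d w x = d w y"
  shows False
proof -
  have CV: "C \<subseteq> V" using C closedA_def by auto
  have wV: "w \<in> V" using wC CV by auto
  have r0V: "r0 \<in> V" "r0 \<noteq> u" using r0 SV uS by auto
  have cut1: "d c z = d c v + d v z" if "c \<in> C" "z \<in> V" "z \<notin> C" for c z
    using cut_dist[OF C that vV] .
  have cut2: "d z c = d z v + d v c" if "c \<in> C" "z \<in> V" "z \<notin> C" for c z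
  proof -
    have cV: "c \<in> V" using that CV by auto
    have "d z c = d c z" using dist_sym[OF that(2) cV] .
    also have "\<dots> = d c v + d v z" by (rule cut1[OF that])
    also have "d c v = d v c" using dist_sym[OF cV vV] .
    also have "d v z = d z v" using dist_sym[OF vV that(2)] .
    finally show ?thesis by simp
  qed
  have dvu: "d v u = 1" using duv dist_sym uV vV by metis
  have dwv: "d w v = 1" using dvw dist_sym wV vV by metis
  have dwu: "d w u = 2" using cut1[OF wC uV uC] dwv dvu by simp
  have dr0u: "d r0 u = 1 + d v r0" using du[OF r0V] dist_sym[OF r0V(1) uV] by simp
  have ww: "d w w = 0" using wV by simp
  have caseu: False if yV: "y' \<in> V" and yu: "y' \<noteq> u" and wy: "d w y' = 2" and Sy: "\<forall>r\<in>S. d r u = d r y'" for y'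
  proof (cases "y' \<in> C")
    case True
    have "d r0 y' = d r0 v + d v y'" using cut2[OF True r0V(1) r0(2)] .
    moreover have "d v r0 = d r0 v" using dist_sym r0V vV by metis
    ultimately have "d v y' = 1" using Sy r0 dr0u by simp
    then have "y' = w" using Bw yV yu Sy by blast
    then show False using wy ww by simp
  next
    case False
    have "d w y' = 1 + d v y'" using cut1[OF wC yV False] dwv by simp
    then have "d v y' = 1" using wy by simp
    then have "y' = w" using Bw yV yu Sy by blast
    then show False using False wC by simp
  qed
  show False
  proof (cases "x = u")
    case True
    then have "y \<noteq> u" "d w y = 2" "\<forall>r\<in>S. d r u = d r y" using xy wxy dwu Sxy by auto
    then show False using caseu[of y] y by blast
  next
    case xu: False
    show False
    proof (cases "y = u")
      case True
      then have "d w x = 2" "\<forall>r\<in>S. d r u = d r x" using wxy dwu Sxy by auto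
      then show False using caseu[of x] x xu by blast
    next
      case yu: False
      have dvxy: "d v x \<noteq> d v y" using du[OF x xu] du[OF y yu] uxy by simp
      have t1: "d r0 y \<le> d r0 v + d v y" "d r0 x \<le> d r0 v + d v x" using tri r0V vV x y by blast+
      have t2: "d w x \<le> d w v + d v x" "d w y \<le> d w v + d v y" using tri wV vV x y by blast+
      have r0xy: "d r0 x = d r0 y" using Sxy r0 by blast
      show False
      proof (cases "x \<in> C"; cases "y \<in> C")
        assume a: "x \<in> C" "y \<in> C"
        have "d r0 x = d r0 v + d v x" by (rule cut2[OF a(1) r0V(1) r0(2)])
        moreover have "d r0 y = d r0 v + d v y" by (rule cut2[OF a(2) r0V(1) r0(2)])
        ultimately show False using r0xy dvxy by linarith
      next
        assume a: "x \<in> C" "y \<notin> C"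
        have "d r0 x = d r0 v + d v x" by (rule cut2[OF a(1) r0V(1) r0(2)])
        moreover have "d w y = d w v + d v y" by (rule cut1[OF wC y a(2)])
        ultimately show False using r0xy dvxy t1 t2 wxy dwv by linarith
      next
        assume a: "x \<notin> C" "y \<in> C"
        have "d r0 y = d r0 v + d v y" by (rule cut2[OF a(2) r0V(1) r0(2)])
        moreover have "d w x = d w v + d v x" by (rule cut1[OF wC x a(1)])
        ultimately show False using r0xy dvxy t1 t2 wxy dwv by linarith
      next
        assume a: "x \<notin> C" "y \<notin> C"
        have "d w x = d w v + d v x" by (rule cut1[OF wC x a(1)])
        moreover have "d w y = d w v + d v y" by (rule cut1[OF wC y a(2)])
        ultimately show False using wxy dvxy by linarith
      qed
    qed
  qed
qed

end

lemma reach_refl: "x \<in> W \<Longrightarrow> reachable W E x x"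
  unfolding reachable_def by (intro exI[of _ "[x]"]) simp

lemma reach_trans: assumes r1: "reachable W E x y" and r2: "reachable W E y z" shows "reachable W E x z"
proof -
  obtain p where p: "is_walk W E p" "hd p = x" "last p = y" using r1 unfolding reachable_def by blast
  obtain q where q: "is_walk W E q" "hd q = y" "last q = z" using r2 unfolding reachable_def by blast
  have pq: "p \<noteq> []" "q \<noteq> []" using p q by auto
  have "is_walk W E (p @ tl q)" using walk_append[OF p(1) q(1)] p q by simp
  moreover have "hd (p @ tl q) = x" using p pq by simp
  moreover have "last (p @ tl q) = z" using last_append_tl[OF pq(2) _ pq(1)] p q by simp
  ultimately show ?thesis unfolding reachable_def by blast
qed

lemma reach_sym: assumes s: "\<forall>x y. E x y \<longrightarrow> E y x" and r: "reachable W E x y" shows "reachable W E y x"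
proof -
  obtain p where p: "is_walk W E p" "hd p = x" "last p = y" using r unfolding reachable_def by blast
  have pn: "p \<noteq> []" using p by auto
  have "is_walk W E (rev p)" using walk_rev[OF s p(1)] .
  moreover have "hd (rev p) = y" using p pn by (simp add: hd_rev)
  moreover have "last (rev p) = x" using p pn by (simp add: last_rev)
  ultimately show ?thesis unfolding reachable_def by blast
qed

lemma reach_step: assumes r: "reachable W E x y" and e: "E y z" and z: "z \<in> W" shows "reachable W E x z"
proof -
  obtain p where p: "is_walk W E p" "hd p = x" "last p = y" using r unfolding reachable_def by blast
  have "p \<noteq> []" using p by auto
  then have "last p \<in> set p" by simp
  then have "y \<in> W" using walk_set[OF p(1)] p(3) by auto
  then have "reachable W E y z" unfolding reachable_def using e z by (intro exI[of _ "[y,z]"]) simp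
  then show ?thesis by (rule reach_trans[OF r])
qed

theorem theorem3:
  fixes V :: "'a set" and E :: "'a \<Rightarrow> 'a \<Rightarrow> bool" and u v :: 'a
  assumes "simple_graph V E"
    and "connected_graph V E"
    and "pendant V E u"
    and "neighbours V E u = {v}"
    and "cut_vertex V E v"
    and "2 \<le> card (components (V - {v, u}) E)"
  shows "\<not> basis_forced V E u"
proof -
  interpret cg V E using assms(1,2) by unfold_locales
  have uV: "u \<in> V" using assms(3) unfolding pendant_def by auto
  have vV: "v \<in> V" and Euv: "E u v" using assms(4) unfolding neighbours_def by auto
  have onlyv: "b = v" if "E u b" for b using assms(4) that edgeV unfolding neighbours_def by blast
  have uv: "u \<noteq> v" using Euv irr by auto
  have symE: "\<forall>x y. E x y \<longrightarrow> E y x" using sym by blast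
  have duv: "d u v = 1" using dist_edge[OF Euv] .
  have clu: "closedA {u} v" using uV uv onlyv unfolding closedA_def by auto
  have du: "d u z = 1 + d v z" if "z \<in> V" "z \<noteq> u" for z
    using cut_dist[OF clu _ that(1) _ vV] that duv by simp
  define V' where "V' = V - {v, u}"
  define comp where "comp a = {y \<in> V'. reachable V' E a y}" for a
  have compV': "comp a \<subseteq> V'" for a unfolding comp_def by auto
  have self: "a \<in> comp a" if "a \<in> V'" for a using that reach_refl unfolding comp_def by auto
  have clc: "closedA (comp a) v" for a
    unfolding closedA_def
  proof (intro conjI ballI allI impI)
    show "comp a \<subseteq> V" using compV' V'_def by auto
    show "v \<notin> comp a" using compV' V'_def by auto
  next
    fix y b assume y: "y \<in> comp a" and e: "E y b"
    have "b \<noteq> u" using y e onlyv sym compV' V'_def by blast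
    moreover have "b \<in> V" using e edgeV by auto
    ultimately show "b \<in> comp a \<or> b = v"
    proof (cases "b = v")
      case False
      then have bV': "b \<in> V'" using \<open>b \<noteq> u\<close> \<open>b \<in> V\<close> V'_def by auto
      have "reachable V' E a y" using y comp_def by auto
      then have "reachable V' E a b" using e bV' by (rule reach_step)
      then show ?thesis using bV' comp_def by auto
    qed simp
  qed
  have uc: "u \<notin> comp a" for a using compV' V'_def by auto
  obtain x1 x2 where x12: "x1 \<in> V'" "x2 \<in> V'" "\<not> reachable V' E x1 x2"
  proof -
    have "components V' E = comp ` V'" unfolding components_def comp_def V'_def by simp
    then have "2 \<le> card (comp ` V')" using assms(6) V'_def by simp
    moreover have finX: "finite (comp ` V')" using finV V'_def by auto
    ultimately have "\<not> (\<forall>a\<in>comp ` V'. \<forall>b\<in>comp ` V'. a = b)"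
      using card_le_Suc0_iff_eq[OF finX] by linarith
    then obtain c1 c2 where "c1 \<in> comp ` V'" "c2 \<in> comp ` V'" "c1 \<noteq> c2" by blast
    then obtain x1 x2 where "x1 \<in> V'" "x2 \<in> V'" "comp x1 \<noteq> comp x2" by auto
    moreover have "comp x1 = comp x2" if r12: "reachable V' E x1 x2"
    proof -
      have r21: "reachable V' E x2 x1" by (rule reach_sym[OF symE r12])
      have "reachable V' E x1 y \<longleftrightarrow> reachable V' E x2 y" for y
        using reach_trans[OF r12, of y] reach_trans[OF r21, of y] by blast
      then show ?thesis unfolding comp_def by simp
    qed
    ultimately show ?thesis using that by blast
  qed
  have nb: "\<exists>a \<in> comp x. E a v" if "x \<in> V'" for x
  proof -
    have xV: "x \<in> V" using that V'_def by auto
    obtain p where p: "is_walk V E p" "hd p = x" "last p = v" using reach[OF xV vV] unfolding reachable_def by blast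
    have "v \<notin> comp x" using clc[of x] unfolding closedA_def by blast
    then show ?thesis using exit_edge[OF clc p(1)] p self[OF that] by simp
  qed
  obtain a1 where a1: "a1 \<in> comp x1" "E a1 v" using nb x12 by blast
  obtain a2 where a2: "a2 \<in> comp x2" "E a2 v" using nb x12 by blast
  have a12V': "a1 \<in> V'" "a2 \<in> V'" using a1 a2 compV' by auto
  have na12: "\<not> reachable V' E a1 a2"
  proof
    assume "reachable V' E a1 a2"
    moreover have "reachable V' E x1 a1" "reachable V' E x2 a2" using a1 a2 comp_def by auto
    ultimately have "reachable V' E x1 a2" by (metis reach_trans)
    moreover have "reachable V' E a2 x2" by (rule reach_sym[OF symE \<open>reachable V' E x2 a2\<close>])
    ultimately have "reachable V' E x1 x2" by (rule reach_trans)
    then show False using x12 by blast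
  qed
  have notboth: "\<not> (a1 \<in> comp w \<and> a2 \<in> comp w)" for w
  proof
    assume "a1 \<in> comp w \<and> a2 \<in> comp w"
    then have w1: "reachable V' E w a1" and w2: "reachable V' E w a2" unfolding comp_def by auto
    have "reachable V' E a1 a2" by (rule reach_trans[OF reach_sym[OF symE w1] w2])
    then show False using na12 by blast
  qed
  have dva: "d v a1 = 1" "d v a2 = 1" using dist_edge[OF sym[OF a1(2)]] dist_edge[OF sym[OF a2(2)]] by auto
  have aV: "a1 \<in> V" "a2 \<in> V" "a1 \<noteq> u" "a2 \<noteq> u" using a12V' V'_def by auto
  have resV: "resolving_set V E V"
    unfolding resolving_set_def
  proof (intro conjI ballI impI)
    fix x y assume "x \<in> V" "y \<in> V" "x \<noteq> y"
    then have "d x x = 0" "d x y \<noteq> 0" using dist_0[of x y] by auto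
    then show "\<exists>r\<in>V. d r x \<noteq> d r y" using \<open>x \<in> V\<close> by (intro bexI[of _ x]) auto
  qed simp
  obtain R where R: "resolving_set V E R" "card R = metric_dim V E"
    using LeastI_ex[of "\<lambda>k. \<exists>R. resolving_set V E R \<and> card R = k"] resV
    unfolding metric_dim_def by blast
  show ?thesis
  proof (cases "u \<in> R")
    case False
    then show ?thesis using R unfolding basis_forced_def metric_basis_def by blast
  next
    case uR: True
    define S where "S = R - {u}"
    have RV: "R \<subseteq> V" using R(1) unfolding resolving_set_def by blast
    have SV: "S \<subseteq> V" and uS: "u \<notin> S" using RV S_def by auto
    define B where "B = {z \<in> V. z \<noteq> u \<and> d v z = 1 \<and> (\<forall>r\<in>S. d r u = d r z)}"
    have Buniq: "y = y'" if "y \<in> B" "y' \<in> B" for y y'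
    proof (rule ccontr)
      assume "y \<noteq> y'"
      moreover have "y \<in> V" "y' \<in> V" using that unfolding B_def by auto
      ultimately obtain r where r: "r \<in> R" "d r y \<noteq> d r y'" using R(1) unfolding resolving_set_def by blast
      show False
      proof (cases "r = u")
        case True
        then show False using r du that unfolding B_def by auto
      next
        case False
        then show False using r that unfolding B_def S_def by auto
      qed
    qed
    have outside: "a \<in> B" if "S \<subseteq> comp w" "a \<in> V" "a \<notin> comp w" "a \<noteq> u" "d v a = 1" for w a
      unfolding B_def
    proof (intro CollectI conjI ballI that)
      fix r assume "r \<in> S"
      then have rc: "r \<in> comp w" using that by auto
      have "d r a = d r v + d v a" using cut_dist[OF clc rc that(2,3) vV] .
      moreover have "d r u = d r v + d v u" using cut_dist[OF clc rc uV uc vV] .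
      moreover have "d v u = 1" using duv dist_sym[OF uV vV] by simp
      ultimately show "d r u = d r a" using that by simp
    qed
    obtain w where w: "w \<in> V" "w \<noteq> u" "d v w = 1" "\<And>z. z \<in> B \<Longrightarrow> z = w" "\<not> S \<subseteq> comp w"
    proof (cases "B = {}")
      case True
      have "\<not> S \<subseteq> comp a1"
      proof
        assume "S \<subseteq> comp a1"
        moreover have "a2 \<notin> comp a1" using notboth self a12V' by blast
        ultimately have "a2 \<in> B" using outside aV dva by blast
        then show False using True by simp
      qed
      then show ?thesis using that[of a1] aV dva True by blast
    next
      case False
      then obtain y where y: "y \<in> B" by blast
      have "y \<noteq> v" using y vV unfolding B_def by auto
      then have yV': "y \<in> V'" using y unfolding B_def V'_def by auto
      have "\<not> S \<subseteq> comp y"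
      proof
        assume Sy: "S \<subseteq> comp y"
        obtain a where a: "a \<in> {a1, a2}" "a \<notin> comp y" using notboth by blast
        then have "a \<in> B" using outside[OF Sy] aV dva by auto
        then have "a = y" using Buniq y by blast
        then show False using a self yV' by blast
      qed
      then show ?thesis using that[of y] y Buniq unfolding B_def by blast
    qed
    have "w \<noteq> v" using w(3) vV by auto
    then have wV': "w \<in> V'" using w(1,2) V'_def by auto
    obtain r0 where r0: "r0 \<in> S" "r0 \<notin> comp w" using w by blast
    define R' where "R' = S \<union> {w}"
    have resR': "resolving_set V E R'"
      unfolding resolving_set_def
    proof (intro conjI ballI impI)
      show "R' \<subseteq> V" using SV w R'_def by auto
    next
      fix x y assume x: "x \<in> V" and y: "y \<in> V" and xy: "x \<noteq> y"
      show "\<exists>r\<in>R'. d r x \<noteq> d r y"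
      proof (rule ccontr)
        assume nr: "\<not> (\<exists>r\<in>R'. d r x \<noteq> d r y)"
        then have Sxy: "\<forall>r\<in>S. d r x = d r y" and wxy: "d w x = d w y" unfolding R'_def by auto
        obtain r where "r \<in> R" "d r x \<noteq> d r y" using R x y xy unfolding resolving_set_def by blast
        then have uxy: "d u x \<noteq> d u y" using Sxy S_def by (cases "r = u") auto
        show False
          apply (rule pair_lemma[OF clc vV uV self[OF wV'] uc w(3) duv _ r0 SV uS _ x y xy uxy Sxy wxy])
          using du apply blast
          using w(4) unfolding B_def by blast
      qed
    qed
    have finR: "finite R" using RV finV finite_subset by blast
    have "card R' \<le> card R"
    proof -
      have finS: "finite S" using finR S_def by simp
      have "R' = insert w S" unfolding R'_def by simp
      then have "card R' \<le> card S + 1" using card_insert_if[OF finS, of w] by simp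
      moreover have "card S = card R - 1" unfolding S_def using card_Diff_singleton[OF uR] .
      moreover have "card R > 0" using finR uR card_gt_0_iff by blast
      ultimately show ?thesis by linarith
    qed
    moreover have "metric_dim V E \<le> card R'"
      unfolding metric_dim_def using resR' by (intro Least_le) blast
    ultimately have "metric_basis V E R'" using R resR' unfolding metric_basis_def by simp
    moreover have "u \<notin> R'" using uS w R'_def by auto
    ultimately show ?thesis unfolding basis_forced_def by blast
  qed
qed

end
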